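(* $\mathsf{AP}(R_2,R_2)=\operatorname{Pol}(R_2,R'_2)=\mathsf{I}$.
   Context: Tuples in $\{0,1\}^4$ are written as strings $abcd$. The relations $R_1,\dots,R_5\subseteq\{0,1\}^4$ are $R_1=\{0000,1000,0100,1100,1010,0110,1001,0101,0011,1011,0111,1111\}$, $R_2=\{0000,1000,0100,1100,1010,0101,0011,1111\}$, $R_3=\{0000,1100,1010,0101,0011,1011,0111,1111\}$, $R_4=\{0000,1100,1010,0101,0011,1111\}$, $R_5=\{0000,1100,1010,0110,1001,0101,0011,1111\}$. For $R,S\subseteq\{0,1\}^4$, a Boolean function $f\colon\{0,1\}^n\to\{0,1\}$ is analogy-preserving relative to $(R,S)$ if for all $\mathbf{a},\mathbf{b},\mathbf{c},\mathbf{d}\in\{0,1\}^n$ with $(a_i,b_i,c_i,d_i)\in R$ for every $i$ and such that $(f(\mathbf{a}),f(\mathbf{b}),f(\mathbf{c}),x)\in S$ for some $x\in\{0,1\}$, we have $(f(\mathbf{a}),f(\mathbf{b}),f(\mathbf{c}),f(\mathbf{d}))\in S$; $\mathsf{AP}(R,S)$ is the set of all such functions of all arities. $S':=S\cup\{(a,b,c,d)\mid\nexists x\colon(a,b,c,x)\in S\}$, and $\operatorname{Pol}(R,S)$ is the set of Boolean functions $f$ with $f(\mathbf{a}_1,\dots,\mathbf{a}_n)\in S$ (componentwise) for all $\mathbf{a}_1,\dots,\mathbf{a}_n\in R$. $\mathsf{I}$ is the set of all Boolean functions (of all arities) that are constant or a projection. *)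

theory Defs
  imports Main
begin

text \<open>A Boolean function of arity n is represented as a pair (n, f) with f :: bool list \<Rightarrow> bool,
where only the values of f on lists of length n matter.\<close>

type_synonym tup = "bool \<times> bool \<times> bool \<times> bool"

definition t4 :: "nat \<Rightarrow> nat \<Rightarrow> nat \<Rightarrow> nat \<Rightarrow> tup" where
  "t4 a b c d = (a = 1, b = 1, c = 1, d = 1)"

definition R2 :: "tup set" where
  "R2 = {t4 0 0 0 0, t4 1 0 0 0, t4 0 1 0 0, t4 1 1 0 0,
         t4 1 0 1 0, t4 0 1 0 1, t4 0 0 1 1, t4 1 1 1 1}"

definition AP :: "tup set \<Rightarrow> tup set \<Rightarrow> (nat \<times> (bool list \<Rightarrow> bool)) set" where
  "AP R S = {(n, f). \<forall>a b c d.
      length a = n \<and> length b = n \<and> length c = n \<and> length d = n \<longrightarrow>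
      (\<forall>i<n. (a ! i, b ! i, c ! i, d ! i) \<in> R) \<longrightarrow>
      (\<exists>x. (f a, f b, f c, x) \<in> S) \<longrightarrow>
      (f a, f b, f c, f d) \<in> S}"

definition Sprime :: "tup set \<Rightarrow> tup set" where
  "Sprime S = S \<union> {(a, b, c, d). \<not> (\<exists>x. (a, b, c, x) \<in> S)}"

definition Pol :: "tup set \<Rightarrow> tup set \<Rightarrow> (nat \<times> (bool list \<Rightarrow> bool)) set" where
  "Pol R S = {(n, f). \<forall>ts :: tup list. length ts = n \<longrightarrow> set ts \<subseteq> R \<longrightarrow>
      (f (map (\<lambda>(a,b,c,d). a) ts), f (map (\<lambda>(a,b,c,d). b) ts),
       f (map (\<lambda>(a,b,c,d). c) ts), f (map (\<lambda>(a,b,c,d). d) ts)) \<in> S}"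

definition Iclone :: "(nat \<times> (bool list \<Rightarrow> bool)) set" where
  "Iclone = {(n, f). (\<exists>v. \<forall>x. length x = n \<longrightarrow> f x = v) \<or>
                     (\<exists>i<n. \<forall>x. length x = n \<longrightarrow> f x = x ! i)}"

end

theory Submission
  imports Defs
begin

lemma R2_iff: "((x,y,z,w) \<in> R2) = (\<not>(\<not>x \<and> y \<and> z) \<and> (w = (z \<and> (x=y)) \<or> (\<not>x \<and> y \<and> \<not>z)))"
  by (cases x; cases y; cases z; cases w; simp add: R2_def t4_def)

lemma S2_iff: "((x,y,z,w) \<in> Sprime R2) = (w = (z \<and> (x=y)) \<or> (\<not>x \<and> y))"
  unfolding Sprime_def by (cases x; cases y; cases z; cases w; auto simp: R2_iff)

lemma map_nth_len: "length a = n \<Longrightarrow> map (\<lambda>i. a ! i) [0..<n] = a"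
  using map_nth[of a] by (simp add: eta_contract_eq)

lemma pol_use:
  assumes P: "(n,f) \<in> Pol R S" and la: "length a = n" and lb: "length b = n"
    and lc: "length c = n" and ld: "length d = n"
    and H: "\<forall>i<n. (a!i,b!i,c!i,d!i) \<in> R"
  shows "(f a, f b, f c, f d) \<in> S"
proof -
  define ts where "ts = map (\<lambda>i. (a!i,b!i,c!i,d!i)) [0..<n]"
  have s: "set ts \<subseteq> R" using H by (auto simp: ts_def)
  have l: "length ts = n" by (simp add: ts_def)
  have e1: "map (\<lambda>(a,b,c,d). a) ts = a" using la by (simp add: ts_def comp_def map_nth_len)
  have e2: "map (\<lambda>(a,b,c,d). b) ts = b" using lb by (simp add: ts_def comp_def map_nth_len)
  have e3: "map (\<lambda>(a,b,c,d). c) ts = c" using lc by (simp add: ts_def comp_def map_nth_len)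
  have e4: "map (\<lambda>(a,b,c,d). d) ts = d" using ld by (simp add: ts_def comp_def map_nth_len)
  have "\<forall>ts :: tup list. length ts = n \<longrightarrow> set ts \<subseteq> R \<longrightarrow>
      (f (map (\<lambda>(a,b,c,d). a) ts), f (map (\<lambda>(a,b,c,d). b) ts),
       f (map (\<lambda>(a,b,c,d). c) ts), f (map (\<lambda>(a,b,c,d). d) ts)) \<in> S"
    using P unfolding Pol_def by simp
  hence "(f (map (\<lambda>(a,b,c,d). a) ts), f (map (\<lambda>(a,b,c,d). b) ts),
       f (map (\<lambda>(a,b,c,d). c) ts), f (map (\<lambda>(a,b,c,d). d) ts)) \<in> S"
    using s l by blast
  thus ?thesis unfolding e1 e2 e3 e4 .
qed

lemma AP_dir1:
  assumes A: "(n,f) \<in> AP R S" and L: "length ts = n" and S: "set ts \<subseteq> R"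
  shows "(f (map (\<lambda>(a,b,c,d). a) ts), f (map (\<lambda>(a,b,c,d). b) ts),
        f (map (\<lambda>(a,b,c,d). c) ts), f (map (\<lambda>(a,b,c,d). d) ts)) \<in> Sprime S"
proof -
      let ?a = "map (\<lambda>(a,b,c,d). a) ts" and ?b = "map (\<lambda>(a,b,c,d). b) ts"
      let ?c = "map (\<lambda>(a,b,c,d). c) ts" and ?d = "map (\<lambda>(a,b,c,d). d) ts"
      have "\<forall>i<n. (?a!i,?b!i,?c!i,?d!i) \<in> R"
      proof (intro allI impI)
        fix i assume "i < n"
        hence T: "ts ! i \<in> R" using S L by auto
        obtain p q r s where E: "ts ! i = (p,q,r,s)" by (cases "ts!i") auto
        have "?a!i = p" "?b!i = q" "?c!i = r" "?d!i = s" using \<open>i<n\<close> L E by simp_all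
        thus "(?a!i,?b!i,?c!i,?d!i) \<in> R" using T E by simp
      qed
      moreover have "length ?a = n" "length ?b = n" "length ?c = n" "length ?d = n" using L by simp_all
      ultimately have "(\<exists>x. (f ?a, f ?b, f ?c, x) \<in> S) \<longrightarrow> (f ?a, f ?b, f ?c, f ?d) \<in> S"
        using A unfolding AP_def by blast
      thus "(f ?a, f ?b, f ?c, f ?d) \<in> Sprime S" unfolding Sprime_def by auto
qed

lemma AP_dir2:
  assumes P: "(n,f) \<in> Pol R (Sprime S)" shows "(n,f) \<in> AP R S"
  unfolding AP_def
proof (intro CollectI case_prodI allI impI)
  fix a b c d
  assume H: "length a = n \<and> length b = n \<and> length c = n \<and> length d = n"
    "\<forall>i<n. (a!i,b!i,c!i,d!i) \<in> R" "\<exists>x. (f a, f b, f c, x) \<in> S"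
  have "(f a, f b, f c, f d) \<in> Sprime S"
    using H(1) by (intro pol_use[OF P, of a b c d] H(2)) simp_all
  thus "(f a, f b, f c, f d) \<in> S" using H(3) unfolding Sprime_def by blast
qed

lemma AP_Pol: "AP R S = Pol R (Sprime S)"
proof (rule set_eqI)
  fix p :: "nat \<times> (bool list \<Rightarrow> bool)"
  obtain n f where p: "p = (n,f)" by (cases p)
  have "(n,f) \<in> AP R S \<Longrightarrow> (n,f) \<in> Pol R (Sprime S)"
    unfolding Pol_def using AP_dir1 by blast
  thus "(p \<in> AP R S) = (p \<in> Pol R (Sprime S))" using AP_dir2 p by blast
qed

lemma I_sub1:
  assumes "(n,f) \<in> Iclone" shows "(n,f) \<in> Pol R2 (Sprime R2)"
proof -
  from assms consider v where "\<forall>x. length x = n \<longrightarrow> f x = v"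
    | i where "i < n" "\<forall>x. length x = n \<longrightarrow> f x = x ! i" unfolding Iclone_def by auto
  thus "(n,f) \<in> Pol R2 (Sprime R2)"
  proof cases
    case 1 thus ?thesis unfolding Pol_def by (auto simp: S2_iff)
  next
    case 2
    show ?thesis unfolding Pol_def
    proof (intro CollectI case_prodI allI impI)
      fix ts :: "tup list" assume L: "length ts = n" and S: "set ts \<subseteq> R2"
      hence "ts ! i \<in> R2" using 2 by auto
      hence "ts ! i \<in> Sprime R2" unfolding Sprime_def by auto
      thus "(f (map (\<lambda>(a,b,c,d). a) ts), f (map (\<lambda>(a,b,c,d). b) ts),
        f (map (\<lambda>(a,b,c,d). c) ts), f (map (\<lambda>(a,b,c,d). d) ts)) \<in> Sprime R2"
        using 2 L by (cases "ts!i") auto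
    qed
  qed
qed

lemma I_sub: "Iclone \<subseteq> Pol R2 (Sprime R2)"
  using I_sub1 by auto

lemma Pol_sub1:
  assumes P: "(n,f) \<in> Pol R2 (Sprime R2)" shows "(n,f) \<in> Iclone"
proof -
  define z where "z = replicate n False"
  define one where "one = replicate n True"
  show "(n,f) \<in> Iclone"
  proof (cases "f z")
    case True
    have "\<forall>x. length x = n \<longrightarrow> f x = True"
    proof (intro allI impI)
      fix x :: "bool list" assume "length x = n"
      hence "(f z, f x, f z, f z) \<in> Sprime R2"
        by (intro pol_use[OF P]) (auto simp: z_def R2_iff)
      thus "f x = True" using True by (simp add: S2_iff)
    qed
    thus ?thesis unfolding Iclone_def by auto
  next
    case False
    have key: "f (map2 (\<lambda>ci ai. ci \<and> \<not>ai) c a) = (f c \<and> \<not> f a)"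
      if "length a = n" "length c = n" for a c
    proof -
      have "(f a, f z, f c, f (map2 (\<lambda>ci ai. ci \<and> \<not>ai) c a)) \<in> Sprime R2"
        using that by (intro pol_use[OF P]) (auto simp: z_def R2_iff)
      thus ?thesis using False by (simp add: S2_iff)
    qed
    show ?thesis
    proof (cases "f one")
      case False
      have "\<forall>x. length x = n \<longrightarrow> f x = False"
      proof (intro allI impI)
        fix x :: "bool list" assume "length x = n"
        have "\<not> f x"
        proof
        assume "f x"
        have "map2 (\<lambda>ci ai. ci \<and> \<not>ai) one (map Not x) = x"
          using \<open>length x = n\<close> by (auto simp: one_def intro: nth_equalityI)
        thus False using key[of "map Not x" one] \<open>length x = n\<close> False \<open>f x\<close> by (simp add: one_def)
        qed
        thus "f x = False" by simp
      qed
      thus ?thesis unfolding Iclone_def by auto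
    next
      case True
      have neg: "f (map Not a) = (\<not> f a)" if "length a = n" for a
      proof -
        have "map2 (\<lambda>ci ai. ci \<and> \<not>ai) one a = map Not a"
          using that by (auto simp: one_def intro: nth_equalityI)
        thus ?thesis using key[of a one] that True by (simp add: one_def)
      qed
      have meet: "f (map2 (\<and>) x y) = (f x \<and> f y)" if "length x = n" "length y = n" for x y
      proof -
        have "map2 (\<lambda>ci ai. ci \<and> \<not>ai) x (map Not y) = map2 (\<and>) x y"
          using that by (auto intro: nth_equalityI)
        thus ?thesis using key[of "map Not y" x] that neg[of y] by simp
      qed
      define e where "e = (\<lambda>i. map (\<lambda>j. j = i) [0..<n])"
      have "\<exists>i<n. f (e i)"
      proof (rule ccontr)
        assume H: "\<not> (\<exists>i<n. f (e i))"
        have "k \<le> n \<Longrightarrow> f (map (\<lambda>j. k \<le> j) [0..<n])" for k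
        proof (induction k)
          case 0
          have "map (\<lambda>j. 0 \<le> j) [0..<n] = one" by (auto simp: one_def intro: nth_equalityI)
          thus ?case using True by simp
        next
          case (Suc k)
          have "map (\<lambda>j. Suc k \<le> j) [0..<n] = map2 (\<and>) (map (\<lambda>j. k \<le> j) [0..<n]) (map Not (e k))"
            by (auto simp: e_def intro: nth_equalityI)
          moreover have "f (map Not (e k))" using neg[of "e k"] H Suc.prems by (simp add: e_def)
          ultimately show ?case using meet[of "map (\<lambda>j. k \<le> j) [0..<n]" "map Not (e k)"] Suc
            by (simp add: e_def)
        qed
        from this[of n] have "f (map (\<lambda>j. n \<le> j) [0..<n])" by simp
        moreover have "map (\<lambda>j. n \<le> j) [0..<n] = z" by (auto simp: z_def intro: nth_equalityI)
        ultimately show False using \<open>\<not> f z\<close> by simp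
      qed
      then obtain i where i: "i < n" "f (e i)" by auto
      have "\<forall>x. length x = n \<longrightarrow> f x = x ! i"
      proof (intro allI impI)
        fix x :: "bool list" assume lx: "length x = n"
        have le: "length (e i) = n" by (simp add: e_def)
        show "f x = x ! i"
        proof (cases "x ! i")
          case True
          have "map2 (\<and>) x (e i) = e i" using lx True by (auto simp: e_def intro: nth_equalityI)
          thus ?thesis using meet[OF lx le] i True by simp
        next
          case False
          have "map2 (\<and>) x (e i) = z" using lx False by (auto simp: e_def z_def intro: nth_equalityI)
          thus ?thesis using meet[OF lx le] i False \<open>\<not> f z\<close> by simp
        qed
      qed
      thus ?thesis unfolding Iclone_def using i by auto
    qed
  qed
qed

lemma Pol_sub: "Pol R2 (Sprime R2) \<subseteq> Iclone"
  using Pol_sub1 by auto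

theorem mainTheorem8:
  shows "AP R2 R2 = Pol R2 (Sprime R2) \<and> Pol R2 (Sprime R2) = Iclone"
  using AP_Pol I_sub Pol_sub by blast

end
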